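(* Let $K\ge 2$ and let $r\in[0,1]^K$ satisfy $r(1)>r(2)>\cdots>r(K)$. Fix a sub-optimal arm $j\in\{2,\ldots,K\}$ and a temperature $\eta>0$. For a policy $\pi=\pi_\theta$ write $\varepsilon:=1-\pi(j)$ and $p_a:=\pi(a)$. There exists $\varepsilon_0(\eta)>0$ such that for all $\varepsilon\in(0,\varepsilon_0(\eta))$: if $p_1\ge\varepsilon/K$, then under the Delightful Policy Gradient (DG) flow at temperature $\eta$, \[ \dot\theta(1)-\dot\theta(j)\;\ge\;\frac{\Delta_{1j}}{8K}\,\varepsilon . \]
   Context: $K$-armed bandit: the policy is parameterized by logits $\theta\in\mathbb{R}^K$ via the softmax $\pi_\theta(a)=e^{\theta(a)}/\sum_{a'}e^{\theta(a')}$. The advantage is $U(a):=r(a)-\pi_\theta^\top r$, the surprisal is $\ell(a):=-\log\pi(a)$, and $\Delta_{ab}:=r(a)-r(b)$. With $\sigma(x)=1/(1+e^{-x})$, the DG gate is $w(a):=\sigma(U(a)\ell(a)/\eta)$ and the DG flow is $\dot\theta(a)=\sum_{a'=1}^K w(a')\,\pi(a')\,U(a')\,(\mathbf{1}\{a=a'\}-\pi(a))$. *)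

theory Defs
  imports Complex_Main
begin

text \<open>K-armed bandit with arms 1..K; logits theta :: nat => real (only values on 1..K matter).\<close>

definition softmax :: "nat \<Rightarrow> (nat \<Rightarrow> real) \<Rightarrow> nat \<Rightarrow> real" where
  "softmax K \<theta> a = exp (\<theta> a) / (\<Sum>a'\<in>{1..K}. exp (\<theta> a'))"

definition advantage :: "nat \<Rightarrow> (nat \<Rightarrow> real) \<Rightarrow> (nat \<Rightarrow> real) \<Rightarrow> nat \<Rightarrow> real" where
  "advantage K r \<theta> a = r a - (\<Sum>a'\<in>{1..K}. softmax K \<theta> a' * r a')"

definition surprisal :: "nat \<Rightarrow> (nat \<Rightarrow> real) \<Rightarrow> nat \<Rightarrow> real" where
  "surprisal K \<theta> a = - ln (softmax K \<theta> a)"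

definition sigmoid :: "real \<Rightarrow> real" where
  "sigmoid x = 1 / (1 + exp (- x))"

definition dg_gate :: "nat \<Rightarrow> (nat \<Rightarrow> real) \<Rightarrow> real \<Rightarrow> (nat \<Rightarrow> real) \<Rightarrow> nat \<Rightarrow> real" where
  "dg_gate K r \<eta> \<theta> a = sigmoid (advantage K r \<theta> a * surprisal K \<theta> a / \<eta>)"

definition dg_flow :: "nat \<Rightarrow> (nat \<Rightarrow> real) \<Rightarrow> real \<Rightarrow> (nat \<Rightarrow> real) \<Rightarrow> nat \<Rightarrow> real" where
  "dg_flow K r \<eta> \<theta> a =
     (\<Sum>a'\<in>{1..K}. dg_gate K r \<eta> \<theta> a' * softmax K \<theta> a' * advantage K r \<theta> a'
        * ((if a = a' then 1 else 0) - softmax K \<theta> a))"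

end

theory Submission
  imports Defs
begin

lemma flow_eq:
  assumes "b \<in> {1..K}"
  shows "dg_flow K r \<eta> \<theta> b = dg_gate K r \<eta> \<theta> b * softmax K \<theta> b * advantage K r \<theta> b
     - softmax K \<theta> b * (\<Sum>a\<in>{1..K}. dg_gate K r \<eta> \<theta> a * softmax K \<theta> a * advantage K r \<theta> a)"
proof -
  let ?f = "\<lambda>a. dg_gate K r \<eta> \<theta> a * softmax K \<theta> a * advantage K r \<theta> a"
  have "dg_flow K r \<eta> \<theta> b = (\<Sum>a\<in>{1..K}. (if b = a then ?f a else 0) - ?f a * softmax K \<theta> b)"
    unfolding dg_flow_def by (intro sum.cong) (auto simp: algebra_simps)
  also have "\<dots> = ?f b - softmax K \<theta> b * (\<Sum>a\<in>{1..K}. ?f a)"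
    using assms by (simp add: sum_subtractf sum_distrib_left mult.commute)
  finally show ?thesis .
qed

lemma softmax_pos: "K \<ge> 1 \<Longrightarrow> softmax K \<theta> a > 0"
  unfolding softmax_def by (intro divide_pos_pos) (auto intro!: sum_pos)

lemma softmax_sum: "K \<ge> 1 \<Longrightarrow> (\<Sum>a\<in>{1..K}. softmax K \<theta> a) = 1"
proof -
  assume K: "K \<ge> 1"
  have "(\<Sum>a\<in>{1..K}. exp (\<theta> a)) > 0" using K by (auto intro!: sum_pos)
  then show ?thesis unfolding softmax_def by (simp add: sum_divide_distrib[symmetric])
qed

lemma sig_pos: "sigmoid x > 0"
  unfolding sigmoid_def by (simp add: add_pos_pos)

lemma sig_le1: "sigmoid x \<le> 1"
  unfolding sigmoid_def by (simp add: add_pos_pos)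

lemma sig_ge_half: "0 \<le> x \<Longrightarrow> sigmoid x \<ge> 1/2"
proof -
  assume "0 \<le> x"
  then have e: "exp (- x) \<le> 1" by simp
  have "1 / 2 \<le> 1 / (1 + exp (- x))"
    by (rule divide_left_mono) (use e in \<open>auto simp: add_pos_pos\<close>)
  then show ?thesis unfolding sigmoid_def .
qed

lemma sig_le_exp: "sigmoid x \<le> exp x"
proof -
  have "1 / (1 + exp (- x)) \<le> 1 / exp (- x)"
    by (rule divide_left_mono) (auto simp: add_pos_pos)
  moreover have "1 / exp (- x) = exp x" by (simp add: exp_minus divide_inverse)
  ultimately show ?thesis unfolding sigmoid_def by simp
qed

theorem theorem2:
  fixes K :: nat and r :: "nat \<Rightarrow> real" and j :: nat and \<eta> :: real
  assumes "K \<ge> 2"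
    and "\<forall>a\<in>{1..K}. 0 \<le> r a \<and> r a \<le> 1"
    and "\<forall>a b. 1 \<le> a \<longrightarrow> a < b \<longrightarrow> b \<le> K \<longrightarrow> r a > r b"
    and "j \<in> {2..K}"
    and "\<eta> > 0"
  shows "\<exists>\<epsilon>0 > 0. \<forall>\<theta> :: nat \<Rightarrow> real.
           let \<epsilon> = 1 - softmax K \<theta> j in
           0 < \<epsilon> \<longrightarrow> \<epsilon> < \<epsilon>0 \<longrightarrow> softmax K \<theta> 1 \<ge> \<epsilon> / real K \<longrightarrow>
           dg_flow K r \<eta> \<theta> 1 - dg_flow K r \<eta> \<theta> j \<ge> (r 1 - r j) / (8 * real K) * \<epsilon>"
proof -
  define I where "I = {1..K}"
  have K1: "K \<ge> 1" "real K \<ge> 2" using assms(1) by auto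
  have fI: "finite I" by (simp add: I_def)
  have j: "j \<in> I" "j \<noteq> 1" "1 \<in> I" using assms(1,4) by (auto simp: I_def)
  have r01: "0 \<le> r a" "r a \<le> 1" if "a \<in> I" for a using assms(2) that by (auto simp: I_def)
  define \<Delta> where "\<Delta> = r 1 - r j"
  have \<Delta>pos: "\<Delta> > 0" using assms(3)[rule_format, of 1 j] assms(4) unfolding \<Delta>_def by auto
  have rne: "r a \<noteq> r j" if "a \<in> I" "a \<noteq> j" for a
  proof (cases "a < j")
    case True then show ?thesis using assms(3)[rule_format, of a j] that j by (auto simp: I_def)
  next
    case False then have "j < a" using that by auto
    then show ?thesis using assms(3)[rule_format, of j a] that j by (auto simp: I_def)
  qed
  define \<delta> where "\<delta> = Min ((\<lambda>a. \<bar>r a - r j\<bar>) ` (I - {j}))"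
  have fin: "finite ((\<lambda>a. \<bar>r a - r j\<bar>) ` (I - {j}))" using fI by simp
  have ne: "(\<lambda>a. \<bar>r a - r j\<bar>) ` (I - {j}) \<noteq> {}" using j by auto
  have \<delta>pos: "\<delta> > 0"
    unfolding \<delta>_def using fin ne rne by (subst Min_gr_iff) auto
  have \<delta>le: "\<delta> \<le> \<bar>r a - r j\<bar>" if "a \<in> I" "a \<noteq> j" for a
    unfolding \<delta>_def using fin that by (intro Min_le) auto
  define c where "c = \<Delta> / (8 * real K)"
  have cpos: "c > 0" using \<Delta>pos K1 by (simp add: c_def)
  define e3 where "e3 = exp (2 * \<eta> * ln c / \<delta>)"
  define e0 where "e0 = min (min (1/2) (\<Delta>/(16*real K))) (min (\<delta>/2) e3)"
  have e0pos: "e0 > 0" using \<Delta>pos \<delta>pos K1 by (simp add: e0_def e3_def)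
  show ?thesis
  proof (intro exI[of _ e0] conjI allI)
    show "e0 > 0" by (rule e0pos)
    fix \<theta> :: "nat \<Rightarrow> real"
    define p where "p = softmax K \<theta>"
    define V where "V = (\<Sum>a\<in>I. p a * r a)"
    define U where "U = advantage K r \<theta>"
    define w where "w = dg_gate K r \<eta> \<theta>"
    define Lq where "Lq = surprisal K \<theta>"
    define \<epsilon> where "\<epsilon> = 1 - p j"
    have U: "U a = r a - V" for a unfolding U_def advantage_def V_def p_def I_def by simp
    have Lq: "Lq a = - ln (p a)" for a unfolding Lq_def surprisal_def p_def by simp
    have w: "w a = sigmoid (U a * Lq a / \<eta>)" for a
      unfolding w_def dg_gate_def U_def Lq_def by simp
    have ppos: "p a > 0" for a unfolding p_def using softmax_pos K1 by blast
    have psum: "(\<Sum>a\<in>I. p a) = 1" unfolding p_def I_def using softmax_sum K1 by blast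
    have sumj: "(\<Sum>a\<in>I - {j}. p a) = \<epsilon>"
      using sum.remove[OF fI j(1), of p] psum by (simp add: \<epsilon>_def)
    have ple1: "p a \<le> 1" if "a \<in> I" for a
      using member_le_sum[of a I p] that fI ppos psum by (simp add: less_imp_le)
    have pa_le: "p a \<le> \<epsilon>" if "a \<in> I" "a \<noteq> j" for a
      using member_le_sum[of a "I - {j}" p] that fI ppos sumj by (simp add: less_imp_le)
    have main: "dg_flow K r \<eta> \<theta> 1 - dg_flow K r \<eta> \<theta> j \<ge> \<Delta>/(8*real K) * \<epsilon>"
      if h: "0 < \<epsilon>" "\<epsilon> < e0" "\<epsilon>/real K \<le> p 1"
    proof -
      define B where "B = \<Delta>/(8*real K) * \<epsilon>"
      have eps: "\<epsilon> \<le> 1/2" "\<epsilon> \<le> \<Delta>/(16*real K)" "\<epsilon> < \<delta>/2" "\<epsilon> < e3"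
        using h(2) by (auto simp: e0_def)
      have p1: "p 1 \<le> \<epsilon>" using pa_le j by auto
      have Vrep: "(\<Sum>a\<in>I. p a * (r a - r j)) = V - (\<Sum>a\<in>I. p a) * r j"
        by (simp add: V_def right_diff_distrib sum_subtractf sum_distrib_right)
      have "\<bar>\<Sum>a\<in>I. p a * (r a - r j)\<bar> \<le> (\<Sum>a\<in>I. \<bar>p a * (r a - r j)\<bar>)"
        by (rule sum_abs)
      also have "\<dots> \<le> (\<Sum>a\<in>I. if a = j then 0 else p a)"
      proof (rule sum_mono)
        fix a assume a: "a \<in> I"
        show "\<bar>p a * (r a - r j)\<bar> \<le> (if a = j then 0 else p a)"
        proof (cases "a = j")
          case False
          have "\<bar>r a - r j\<bar> \<le> 1" using r01[OF a] r01[OF j(1)] by auto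
          then have "p a * \<bar>r a - r j\<bar> \<le> p a * 1"
            by (intro mult_left_mono) (auto simp: less_imp_le ppos)
          then show ?thesis using False ppos[of a] by (simp add: abs_mult)
        qed simp
      qed
      also have "\<dots> = \<epsilon>"
        using fI j(1) sumj by (subst sum.delta_remove) auto
      finally have Vb: "\<bar>V - r j\<bar> \<le> \<epsilon>" using Vrep psum by simp
      have V01: "0 \<le> V" "V \<le> 1"
      proof -
        show "0 \<le> V" unfolding V_def using r01 ppos by (intro sum_nonneg) (simp add: less_imp_le)
        have "V \<le> (\<Sum>a\<in>I. p a * 1)" unfolding V_def
          using r01 ppos by (intro sum_mono mult_left_mono) (auto simp: less_imp_le)
        then show "V \<le> 1" using psum by simp
      qed
      have Uabs: "\<bar>U a\<bar> \<le> 1" if "a \<in> I" for a using r01[OF that] V01 U[of a] by auto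
      have Lqnn: "Lq a \<ge> 0" if "a \<in> I" for a using ple1[OF that] ppos[of a] Lq[of a] by simp
      have K16: "\<Delta>/(16*real K) \<le> \<Delta>/4" using K1 \<Delta>pos by (simp add: field_simps)
      have U1e: "U 1 = \<Delta> - (V - r j)" using U[of 1] by (simp add: \<Delta>_def)
      have U1: "U 1 \<ge> 3*\<Delta>/4" using U1e Vb eps(2) K16 by linarith
      have Uj: "\<bar>U j\<bar> \<le> \<epsilon>" using U[of j] Vb by auto
      have w1: "w 1 \<ge> 1/2" unfolding w
        using U1 \<Delta>pos Lqnn[OF j(3)] assms(5) by (intro sig_ge_half) simp
      have "(1/2)*(\<epsilon>/real K) \<le> w 1 * p 1"
        using w1 h(3) h(1) K1 by (intro mult_mono) auto
      then have "(1/2)*(\<epsilon>/real K)*(3*\<Delta>/4) \<le> w 1 * p 1 * U 1"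
        using U1 \<Delta>pos w1 ppos[of 1] h(1) h(3) K1 by (intro mult_mono) auto
      moreover have "w 1 * p 1 * U 1 \<le> w 1 * p 1 * U 1 * (1 + p j - p 1)"
      proof -
        have "1 \<le> 1 + p j - p 1" using p1 eps(1) \<epsilon>_def by simp
        moreover have "0 \<le> w 1 * p 1 * U 1" using w1 ppos[of 1] U1 \<Delta>pos by simp
        ultimately show ?thesis
          using mult_left_mono[of 1 "1 + p j - p 1" "w 1 * p 1 * U 1"] by simp
      qed
      moreover have "(1/2)*(\<epsilon>/real K)*(3*\<Delta>/4) = 3*B" unfolding B_def
        using K1 by (simp add: field_simps)
      ultimately have T1: "w 1 * p 1 * U 1 * (1 + p j - p 1) \<ge> 3*B" by linarith
      have wj: "\<bar>w j\<bar> \<le> 1" unfolding w using sig_le1 sig_pos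
        by (metis abs_of_pos)
      have pj: "\<bar>p j\<bar> \<le> 1" using ple1[OF j(1)] ppos[of j] by simp
      have fj: "\<bar>1 - p j + p 1\<bar> \<le> 2*\<epsilon>" using p1 ppos[of 1] \<epsilon>_def by auto
      have "\<bar>w j * p j * U j * (1 - p j + p 1)\<bar> \<le> 1 * 1 * \<epsilon> * (2*\<epsilon>)"
        unfolding abs_mult using wj pj Uj fj h(1)
        by (intro mult_mono) auto
      also have "\<dots> = \<epsilon> * (2*\<epsilon>)" by simp
      also have "\<dots> \<le> \<epsilon> * (\<Delta>/(8*real K))"
        using eps(2) h(1) K1 by (intro mult_left_mono) (auto simp: field_simps)
      also have "\<dots> = B" unfolding B_def by simp
      finally have T2: "\<bar>w j * p j * U j * (1 - p j + p 1)\<bar> \<le> B" .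
      define A where "A = I - {1} - {j}"
      define R where "R = (\<Sum>a\<in>A. w a * p a * U a)"
      have wsmall: "w a \<le> c" if a: "a \<in> I" "a \<noteq> j" "U a < 0" for a
      proof -
        have "r a < r j + \<delta>" using a(3) U[of a] Vb eps(3) by auto
        then have "r a \<le> r j - \<delta>" using \<delta>le[OF a(1,2)] by auto
        then have Ua: "U a \<le> - (\<delta>/2)" using U[of a] Vb eps(3) by auto
        have lnle: "ln (p a) \<le> ln \<epsilon>" using pa_le[OF a(1,2)] ppos[of a] by simp
        have "U a * Lq a \<le> - (\<delta>/2) * Lq a"
          using Ua Lqnn[OF a(1)] by (intro mult_right_mono) auto
        also have "\<dots> \<le> - (\<delta>/2) * (- ln \<epsilon>)"
          using lnle Lq[of a] \<delta>pos by (intro mult_left_mono_neg) auto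
        finally have "U a * Lq a / \<eta> \<le> \<delta> * ln \<epsilon> / (2*\<eta>)"
          using assms(5) by (simp add: field_simps)
        also have "\<dots> < ln c"
        proof -
          have "ln \<epsilon> < 2 * \<eta> * ln c / \<delta>" using eps(4) h(1) unfolding e3_def
            by (metis exp_less_cancel_iff exp_ln)
          then have "\<delta> * ln \<epsilon> < 2 * \<eta> * ln c" using \<delta>pos by (simp add: field_simps)
          then show ?thesis using assms(5) by (simp add: field_simps)
        qed
        finally have "exp (U a * Lq a / \<eta>) < c" using cpos
          by (metis exp_less_cancel_iff exp_ln)
        then show ?thesis unfolding w using sig_le_exp by (meson less_imp_le order_trans)
      qed
      have "R \<ge> (\<Sum>a\<in>A. - (c * p a))" unfolding R_def
      proof (rule sum_mono)
        fix a assume a: "a \<in> A"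
        then have aI: "a \<in> I" "a \<noteq> j" by (auto simp: A_def)
        have wp: "w a * p a \<ge> 0" unfolding w using sig_pos ppos[of a]
          by (simp add: less_imp_le)
        show "- (c * p a) \<le> w a * p a * U a"
        proof (cases "U a \<ge> 0")
          case True
          then have "0 \<le> w a * p a * U a" using wp by simp
          moreover have "0 \<le> c * p a" using cpos ppos[of a] by simp
          ultimately show ?thesis by linarith
        next
          case False
          have "w a * p a * (-1) \<le> w a * p a * U a"
            using Uabs[OF aI(1)] wp by (intro mult_left_mono) auto
          moreover have "w a * p a \<le> c * p a"
            using wsmall[OF aI] False ppos[of a] by (intro mult_right_mono) auto
          ultimately show ?thesis by linarith
        qed
      qed
      moreover have "(\<Sum>a\<in>A. p a) \<le> (\<Sum>a\<in>I - {j}. p a)"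
        using fI ppos by (intro sum_mono2) (auto simp: A_def less_imp_le)
      moreover have "(\<Sum>a\<in>A. - (c * p a)) = - (c * (\<Sum>a\<in>A. p a))"
        by (simp add: sum_negf sum_distrib_left)
      moreover have "c * (\<Sum>a\<in>A. p a) \<le> c * \<epsilon>"
        using calculation(2) sumj cpos by (intro mult_left_mono) auto
      ultimately have "R \<ge> - (c * \<epsilon>)" by linarith
      then have Rb: "R \<ge> - B" unfolding B_def c_def by simp
      have pjp1: "0 \<le> p j - p 1" "p j - p 1 \<le> 1" using p1 eps(1) \<epsilon>_def ppos[of 1] by auto
      have T3: "(p j - p 1) * R \<ge> - B"
      proof (cases "R \<ge> 0")
        case True then show ?thesis using pjp1 B_def \<Delta>pos h(1) K1
          by (smt (verit) mult_nonneg_nonneg divide_nonneg_nonneg of_nat_0_le_iff)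
      next
        case False
        have "(p j - p 1) * R \<ge> 1 * R" using False pjp1 by (intro mult_right_mono_neg) auto
        then show ?thesis using Rb by simp
      qed
      define S where "S = (\<Sum>a\<in>I. w a * p a * U a)"
      have S: "S = w 1 * p 1 * U 1 + w j * p j * U j + R"
      proof -
        have "S = w 1 * p 1 * U 1 + (\<Sum>a\<in>I - {1}. w a * p a * U a)"
          unfolding S_def using sum.remove[OF fI j(3)] by blast
        also have "(\<Sum>a\<in>I - {1}. w a * p a * U a) = w j * p j * U j + R"
          unfolding R_def A_def using sum.remove[of "I - {1}" j] fI j by auto
        finally show ?thesis by simp
      qed
      have F1: "dg_flow K r \<eta> \<theta> 1 = w 1 * p 1 * U 1 - p 1 * S"
        using flow_eq[of 1 K r \<eta> \<theta>] j(3)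
        unfolding S_def w_def p_def U_def I_def by simp
      have Fj: "dg_flow K r \<eta> \<theta> j = w j * p j * U j - p j * S"
        using flow_eq[of j K r \<eta> \<theta>] j(1)
        unfolding S_def w_def p_def U_def I_def by simp
      have D: "dg_flow K r \<eta> \<theta> 1 - dg_flow K r \<eta> \<theta> j =
          w 1 * p 1 * U 1 * (1 + p j - p 1) - w j * p j * U j * (1 - p j + p 1) + (p j - p 1) * R"
        unfolding F1 Fj S by (simp add: algebra_simps)
      show ?thesis unfolding D B_def[symmetric] using T1 T2 T3 by linarith
    qed
    show "let \<epsilon> = 1 - softmax K \<theta> j in
           0 < \<epsilon> \<longrightarrow> \<epsilon> < e0 \<longrightarrow> softmax K \<theta> 1 \<ge> \<epsilon> / real K \<longrightarrow>
           dg_flow K r \<eta> \<theta> 1 - dg_flow K r \<eta> \<theta> j \<ge> (r 1 - r j) / (8 * real K) * \<epsilon>"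
      using main unfolding Let_def \<epsilon>_def p_def \<Delta>_def by blast
  qed
qed

end
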